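(* Let the parametric setting, finite element spaces, lifts, finite element solutions and reduced basis solutions be as in the context, and fix $\mu\in\mathcal{D}$. Let $u(\mu)\in V_g(\mu)$ be the exact solution of the weak primal problem and $\sigma(\mu)\in\Sigma_{fg}(\mu)$ the exact solution of the dual problem. Then $$|\!|\!|u(\mu)-u_h(\mu)|\!|\!|_\mu\le|\!|\!|u(\mu)-u^N_{rb}(\mu)|\!|\!|_\mu,\qquad \|\sigma(\mu)-\sigma_h(\mu)\|_{R,\mu}\le\|\sigma(\mu)-\sigma^N_{rb}(\mu)\|_{R,\mu},$$ $$|\!|\!|(u(\mu)-u_h(\mu),\sigma(\mu)-\sigma_h(\mu))|\!|\!|_\mu\le|\!|\!|(u(\mu)-u^N_{rb}(\mu),\sigma(\mu)-\sigma^N_{rb}(\mu))|\!|\!|_\mu.$$ If moreover $\mu\in S_N$, all three inequalities are equalities.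
   Context: Setting: $\Omega\subset\mathbb{R}^d$ ($d=2,3$) bounded polyhedral Lipschitz; $(\cdot,\cdot)$ the (possibly vector) $L^2(\Omega)$ inner product, $\|\cdot\|_0$ its norm, $(\cdot,\cdot)_\Gamma$ the $L^2$ product on $\Gamma\subset\partial\Omega$. $V$ a Hilbert space compactly embedded in $L^2(\Omega)$, $\Lambda:V\to L^2(\Omega)$ linear continuous, $\Lambda^t$ its formal adjoint, $\Sigma=\{\tau\in L^2(\Omega):\Lambda^t\tau\in L^2(\Omega)\}$, traces $\mathrm{tr}_0$ on $V$, $\mathrm{tr}_1$ on $\Sigma$ with $(\tau,\Lambda v)-(\Lambda^t\tau,v)=(\mathrm{tr}_1\tau,\mathrm{tr}_0v)_{\partial\Omega}$. $\partial\Omega=\overline\Gamma_D\cup\overline\Gamma_N$ disjoint, $\mathrm{meas}(\Gamma_D)\ne0$. $V_0=\{v\in V:\mathrm{tr}_0v=0\text{ on }\Gamma_D\}$, $\Sigma_0=\{\tau\in\Sigma:\mathrm{tr}_1\tau=0\text{ on }\Gamma_N\}$, $\Sigma_{00}=\{\tau\in\Sigma_0:\Lambda^t\tau=0\}$; $\|\Lambda v\|_0\ge c_3\|v\|_0$ on $V_0$; continuous inf-sup $\sup_{\tau\in\Sigma}\frac{(\Lambda^t\tau,v)}{\|\tau\|_0+\|\Lambda^t\tau\|_0}\ge\beta\|v\|_0$. Parameters $\mu$ range over a set $\mathcal{D}$; for each $\mu$, $\mathcal{A}(\mu)$ is self-adjoint on $L^2(\Omega)$ with $c_1\|q\|_0^2\le(\mathcal{A}(\mu)q,q)\le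 c_2\|q\|_0^2$, and data $f(\mu),g_D(\mu),g_N(\mu)\in L^2$ describe $\Lambda^t(\mathcal{A}(\mu)\Lambda u)=f(\mu)$, $\mathrm{tr}_0u=g_D(\mu)$ on $\Gamma_D$, $-\mathrm{tr}_1(\mathcal{A}(\mu)\Lambda u)=g_N(\mu)$ on $\Gamma_N$. $a(v,w;\mu)=(\mathcal{A}(\mu)\Lambda v,\Lambda w)$, $b(\rho,\tau;\mu)=(\mathcal{A}(\mu)^{-1}\rho,\tau)$, $c((\rho,w),(\tau,v);\mu)=b(\rho,\tau;\mu)+(\Lambda^t\tau,w)+(\Lambda^t\rho,v)$. $V_g(\mu)=\{v\in V:\mathrm{tr}_0v=g_D(\mu)\text{ on }\Gamma_D\}$, $\Sigma_{fg}(\mu)=\{\tau\in\Sigma:\Lambda^t\tau=-f(\mu),\ \mathrm{tr}_1\tau=g_N(\mu)\text{ on }\Gamma_N\}$. Exact solutions: $u(\mu)\in V_g(\mu)$ with $a(u(\mu),v;\mu)=(f(\mu),v)-(g_N(\mu),\mathrm{tr}_0v)_{\Gamma_N}$ for all $v\in V_0$; $\sigma(\mu)\in\Sigma_{fg}(\mu)$ with $b(\sigma(\mu),\tau;\mu)=-(\mathrm{tr}_1\tau,g_D(\mu))_{\Gamma_D}$ for all $\tau\in\Sigma_{00}$. Norms: $|\!|\!|v|\!|\!|_\mu=\sqrt{a(v,v;\mu)}$, $\|\tau\|_{R,\mu}=\sqrt{b(\tau,\tau;\mu)}$, $|\!|\!|(v,\tau)|\!|\!|_\mu=\sqrt{|\!|\!|v|\!|\!|_\mu^2+\|\tau\|_{R,\mu}^2}$.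 Finite elements: $V_h\subset V$, $D_h\subset L^2(\Omega)$, $\Sigma_h\subset\Sigma$ finite element spaces with $\Lambda^t\Sigma_h=D_h$ and the pair $(\Sigma_h,D_h)$ satisfying a discrete inf-sup condition; $V_{0,h}=V_h\cap V_0$, $\Sigma_{0,h}=\Sigma_h\cap\Sigma_0$. For each $\mu$ fixed lifts $u_g(\mu)\in V_h\cap V_g(\mu)$ and $\sigma_{fg}(\mu)\in\Sigma_h\cap\Sigma_{fg}(\mu)$ are given (data assumed compatible so these exist, and $f(\mu)\in D_h$). Let $\varphi(v;\mu)=(f(\mu),v)-(g_N(\mu),\mathrm{tr}_0v)_{\Gamma_N}-a(u_g(\mu),v;\mu)$ and $\psi(\tau;\mu)=-(\mathrm{tr}_1\tau,g_D(\mu))_{\Gamma_D}-b(\sigma_{fg}(\mu),\tau;\mu)$. FE primal solution: $u_h(\mu)=u_{0,h}(\mu)+u_g(\mu)$ with $u_{0,h}(\mu)\in V_{0,h}$ and $a(u_{0,h}(\mu),v;\mu)=\varphi(v;\mu)$ for all $v\in V_{0,h}$. FE dual solution: $\sigma_h(\mu)=\sigma_{00,h}(\mu)+\sigma_{fg}(\mu)$ where $(\sigma_{00,h}(\mu),w_h)\in\Sigma_{0,h}\times D_h$ solves $c((\sigma_{00,h}(\mu),w_h),(\tau,v);\mu)=\psi(\tau;\mu)$ for all $(\tau,v)\in\Sigma_{0,h}\times D_h$. Reduced basis: $S_N=\{\mu_i\}_{i=1}^N\subset\mathcal{D}$, $V^N_{rb}=\mathrm{span}\{u_{0,h}(\mu_i)\}_{i=1}^N$,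 $\Sigma^N_{rb}=\mathrm{span}\{\sigma_{00,h}(\mu_i)\}_{i=1}^N$ (snapshots computed with the same lifts). RB primal solution: $u^N_{rb}(\mu)=u^N_{0,rb}(\mu)+u_g(\mu)$ with $u^N_{0,rb}(\mu)\in V^N_{rb}$, $a(u^N_{0,rb}(\mu),v;\mu)=\varphi(v;\mu)$ for all $v\in V^N_{rb}$. RB dual solution: $\sigma^N_{rb}(\mu)=\sigma^N_{00,rb}(\mu)+\sigma_{fg}(\mu)$ with $\sigma^N_{00,rb}(\mu)\in\Sigma^N_{rb}$, $b(\sigma^N_{00,rb}(\mu),\tau;\mu)=\psi(\tau;\mu)$ for all $\tau\in\Sigma^N_{rb}$. *)

theory Defs
  imports "HOL-Analysis.Analysis"
begin

text \<open>Abstract Hilbert-space rendering of the parametric mixed/primal setting.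
  Types: 'v = V (Hilbert space), 'w = scalar L2(Omega) (target of the embedding of V
  and of the formal adjoint), 'q = (possibly vector) L2(Omega) (target of Lambda),
  'b = L2(boundary of Omega).  Restriction to Gamma_D / Gamma_N is modelled by
  complementary orthogonal projections PD, PN on 'b.\<close>

definition orth_proj :: "('b::real_inner \<Rightarrow> 'b) \<Rightarrow> bool" where
  "orth_proj P \<longleftrightarrow> bounded_linear P \<and> (\<forall>x. P (P x) = P x)
     \<and> (\<forall>x y. inner (P x) y = inner x (P y))"

text \<open>L2 product on a boundary part Gamma, given by its restriction projection.\<close>
definition ip_on :: "('b::real_inner \<Rightarrow> 'b) \<Rightarrow> 'b \<Rightarrow> 'b \<Rightarrow> real" where
  "ip_on P x y = inner (P x) (P y)"

definition linear_on_set :: "'a::real_vector set \<Rightarrow> ('a \<Rightarrow> 'c::real_vector) \<Rightarrow> bool" where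
  "linear_on_set S F \<longleftrightarrow> (\<forall>x\<in>S. \<forall>y\<in>S. F (x + y) = F x + F y)
     \<and> (\<forall>x\<in>S. \<forall>c. F (c *\<^sub>R x) = c *\<^sub>R F x)"

definition fin_dim_space :: "'a::real_vector set \<Rightarrow> bool" where
  "fin_dim_space S \<longleftrightarrow> (\<exists>B. finite B \<and> S = span B)"

definition compact_embedding :: "('v::real_normed_vector \<Rightarrow> 'w::real_normed_vector) \<Rightarrow> bool" where
  "compact_embedding \<iota> \<longleftrightarrow> bounded_linear \<iota> \<and> inj \<iota>
     \<and> (\<forall>S. bounded S \<longrightarrow> compact (closure (\<iota> ` S)))"

definition inf_sup :: "'q::real_normed_vector set \<Rightarrow> ('q \<Rightarrow> 'w::real_inner) \<Rightarrow> 'w set \<Rightarrow> real \<Rightarrow> bool" where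
  "inf_sup S Lt W \<beta> \<longleftrightarrow> (\<forall>v\<in>W. (SUP \<tau>\<in>S. inner (Lt \<tau>) v / (norm \<tau> + norm (Lt \<tau>))) \<ge> \<beta> * norm v)"

definition V0 :: "('v \<Rightarrow> 'b::real_vector) \<Rightarrow> ('b \<Rightarrow> 'b) \<Rightarrow> 'v set" where
  "V0 tr0 PD = {v. PD (tr0 v) = 0}"

definition Vg :: "('v \<Rightarrow> 'b) \<Rightarrow> ('b \<Rightarrow> 'b) \<Rightarrow> 'b \<Rightarrow> 'v set" where
  "Vg tr0 PD g = {v. PD (tr0 v) = PD g}"

definition Sigma0 :: "'q set \<Rightarrow> ('q \<Rightarrow> 'b::real_vector) \<Rightarrow> ('b \<Rightarrow> 'b) \<Rightarrow> 'q set" where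
  "Sigma0 \<Sigma> tr1 PN = {\<tau>\<in>\<Sigma>. PN (tr1 \<tau>) = 0}"

definition Sigma00 :: "'q set \<Rightarrow> ('q \<Rightarrow> 'w::real_vector) \<Rightarrow> ('q \<Rightarrow> 'b::real_vector) \<Rightarrow> ('b \<Rightarrow> 'b) \<Rightarrow> 'q set" where
  "Sigma00 \<Sigma> Lt tr1 PN = {\<tau>\<in>Sigma0 \<Sigma> tr1 PN. Lt \<tau> = 0}"

definition Sigma_fg :: "'q set \<Rightarrow> ('q \<Rightarrow> 'w::real_vector) \<Rightarrow> ('q \<Rightarrow> 'b) \<Rightarrow> ('b \<Rightarrow> 'b) \<Rightarrow> 'w \<Rightarrow> 'b \<Rightarrow> 'q set" where
  "Sigma_fg \<Sigma> Lt tr1 PN f g = {\<tau>\<in>\<Sigma>. Lt \<tau> = - f \<and> PN (tr1 \<tau>) = PN g}"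

text \<open>Bilinear forms; A stands for the operator A(mu) at the fixed parameter.\<close>
definition a_form :: "('q::real_inner \<Rightarrow> 'q) \<Rightarrow> ('v \<Rightarrow> 'q) \<Rightarrow> 'v \<Rightarrow> 'v \<Rightarrow> real" where
  "a_form A \<Lambda> v w = inner (A (\<Lambda> v)) (\<Lambda> w)"

definition b_form :: "('q::real_inner \<Rightarrow> 'q) \<Rightarrow> 'q \<Rightarrow> 'q \<Rightarrow> real" where
  "b_form A \<rho> \<tau> = inner (inv A \<rho>) \<tau>"

definition c_form :: "('q::real_inner \<Rightarrow> 'q) \<Rightarrow> ('q \<Rightarrow> 'w::real_inner) \<Rightarrow> 'q \<times> 'w \<Rightarrow> 'q \<times> 'w \<Rightarrow> real" where
  "c_form A Lt \<rho>w \<tau>v = b_form A (fst \<rho>w) (fst \<tau>v) + inner (Lt (fst \<tau>v)) (snd \<rho>w)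
       + inner (Lt (fst \<rho>w)) (snd \<tau>v)"

definition phi_rhs :: "('q::real_inner \<Rightarrow> 'q) \<Rightarrow> ('v \<Rightarrow> 'q) \<Rightarrow> ('v \<Rightarrow> 'w::real_inner)
    \<Rightarrow> ('v \<Rightarrow> 'b::real_inner) \<Rightarrow> ('b \<Rightarrow> 'b) \<Rightarrow> 'w \<Rightarrow> 'b \<Rightarrow> 'v \<Rightarrow> 'v \<Rightarrow> real" where
  "phi_rhs A \<Lambda> \<iota> tr0 PN f gN ug v = inner f (\<iota> v) - ip_on PN gN (tr0 v) - a_form A \<Lambda> ug v"

definition psi_rhs :: "('q::real_inner \<Rightarrow> 'q) \<Rightarrow> ('q \<Rightarrow> 'b::real_inner) \<Rightarrow> ('b \<Rightarrow> 'b)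
    \<Rightarrow> 'b \<Rightarrow> 'q \<Rightarrow> 'q \<Rightarrow> real" where
  "psi_rhs A tr1 PD gD sfg \<tau> = - ip_on PD (tr1 \<tau>) gD - b_form A sfg \<tau>"

definition energy_norm :: "('q::real_inner \<Rightarrow> 'q) \<Rightarrow> ('v \<Rightarrow> 'q) \<Rightarrow> 'v \<Rightarrow> real" where
  "energy_norm A \<Lambda> v = sqrt (a_form A \<Lambda> v v)"

definition R_norm :: "('q::real_inner \<Rightarrow> 'q) \<Rightarrow> 'q \<Rightarrow> real" where
  "R_norm A \<tau> = sqrt (b_form A \<tau> \<tau>)"

definition pair_norm :: "('q::real_inner \<Rightarrow> 'q) \<Rightarrow> ('v \<Rightarrow> 'q) \<Rightarrow> 'v \<Rightarrow> 'q \<Rightarrow> real" where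
  "pair_norm A \<Lambda> v \<tau> = sqrt ((energy_norm A \<Lambda> v)\<^sup>2 + (R_norm A \<tau>)\<^sup>2)"

end

theory Submission
  imports Defs
begin

lemma quad_orth:
  fixes M :: "'a::real_inner \<Rightarrow> 'a"
  assumes "linear M" "\<forall>x y. inner (M x) y = inner x (M y)" "inner (M x) d = 0"
  shows "inner (M (x+d)) (x+d) = inner (M x) x + inner (M d) d"
proof -
  have "inner (M d) x = inner (M x) d" using assms(2) by (metis inner_commute)
  then show ?thesis using assms(3)
    by (simp add: linear_add[OF assms(1)] inner_add_left inner_add_right)
qed


theorem theorem5p7:
  fixes \<Lambda> :: "'v::{real_inner,complete_space} \<Rightarrow> 'q::{real_inner,complete_space}"
    and \<iota> :: "'v \<Rightarrow> 'w::{real_inner,complete_space}"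
    and Lt :: "'q \<Rightarrow> 'w"
    and \<Sigma> :: "'q set"
    and tr0 :: "'v \<Rightarrow> 'b::{real_inner,complete_space}"
    and tr1 :: "'q \<Rightarrow> 'b"
    and PD PN :: "'b \<Rightarrow> 'b"
    and \<D> :: "'p set"
    and A :: "'p \<Rightarrow> 'q \<Rightarrow> 'q"
    and f :: "'p \<Rightarrow> 'w" and gD gN :: "'p \<Rightarrow> 'b"
    and c1 c2 c3 \<beta> :: real
    and Vh :: "'v set" and Dh :: "'w set" and \<Sigma>h :: "'q set"
    and ug :: "'p \<Rightarrow> 'v" and sfg :: "'p \<Rightarrow> 'q"
    and u0h :: "'p \<Rightarrow> 'v" and s00h :: "'p \<Rightarrow> 'q" and wh :: "'p \<Rightarrow> 'w"
    and SN :: "'p set"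
    and \<mu> :: 'p
    and u :: 'v and \<sigma> :: 'q
    and u0rb :: 'v and s00rb :: 'q
  assumes
    \<comment> \<open>V compactly embedded in L2, Lambda continuous, formal adjoint Lt on Sigma\<close>
    emb: "compact_embedding \<iota>"
    and Lam: "bounded_linear \<Lambda>"
    and Sig_sub: "subspace \<Sigma>"
    and Lt_lin: "linear_on_set \<Sigma> Lt"
    and tr0_lin: "bounded_linear tr0"
    and tr1_lin: "linear_on_set \<Sigma> tr1"
    and green: "\<forall>\<tau>\<in>\<Sigma>. \<forall>v. inner \<tau> (\<Lambda> v) - inner (Lt \<tau>) (\<iota> v) = inner (tr1 \<tau>) (tr0 v)"
    \<comment> \<open>boundary split into Gamma_D and Gamma_N, meas(Gamma_D) \<noteq> 0\<close>
    and PD: "orth_proj PD" and PN: "orth_proj PN"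
    and PDN: "\<forall>x. PD x + PN x = x"
    and PD_nz: "PD \<noteq> (\<lambda>x. 0)"
    \<comment> \<open>Poincare-type inequality and continuous inf-sup\<close>
    and c3: "c3 > 0" and poinc: "\<forall>v\<in>V0 tr0 PD. norm (\<Lambda> v) \<ge> c3 * norm (\<iota> v)"
    and beta: "\<beta> > 0" and infsup: "inf_sup \<Sigma> Lt UNIV \<beta>"
    \<comment> \<open>the operators A(mu)\<close>
    and c12: "c1 > 0" "c2 > 0"
    and A_prop: "\<forall>\<nu>\<in>\<D>. bounded_linear (A \<nu>) \<and> bij (A \<nu>)
        \<and> (\<forall>x y. inner (A \<nu> x) y = inner x (A \<nu> y))
        \<and> (\<forall>q. c1 * (norm q)\<^sup>2 \<le> inner (A \<nu> q) q \<and> inner (A \<nu> q) q \<le> c2 * (norm q)\<^sup>2)"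
    \<comment> \<open>finite element spaces\<close>
    and Vh_fd: "fin_dim_space Vh" and Dh_fd: "fin_dim_space Dh" and Sh_fd: "fin_dim_space \<Sigma>h"
    and Sh_sub: "\<Sigma>h \<subseteq> \<Sigma>"
    and Lt_Sh: "Lt ` \<Sigma>h = Dh"
    and dinfsup: "\<exists>\<beta>h>0. inf_sup \<Sigma>h Lt Dh \<beta>h"
    \<comment> \<open>data and discrete lifts\<close>
    and f_Dh: "\<forall>\<nu>\<in>\<D>. f \<nu> \<in> Dh"
    and ug_prop: "\<forall>\<nu>\<in>\<D>. ug \<nu> \<in> Vh \<inter> Vg tr0 PD (gD \<nu>)"
    and sfg_prop: "\<forall>\<nu>\<in>\<D>. sfg \<nu> \<in> \<Sigma>h \<inter> Sigma_fg \<Sigma> Lt tr1 PN (f \<nu>) (gN \<nu>)"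
    \<comment> \<open>finite element primal and dual solutions (for every parameter)\<close>
    and u0h_prop: "\<forall>\<nu>\<in>\<D>. u0h \<nu> \<in> Vh \<inter> V0 tr0 PD \<and>
        (\<forall>v\<in>Vh \<inter> V0 tr0 PD. a_form (A \<nu>) \<Lambda> (u0h \<nu>) v
            = phi_rhs (A \<nu>) \<Lambda> \<iota> tr0 PN (f \<nu>) (gN \<nu>) (ug \<nu>) v)"
    and s00h_prop: "\<forall>\<nu>\<in>\<D>. s00h \<nu> \<in> \<Sigma>h \<inter> Sigma0 \<Sigma> tr1 PN \<and> wh \<nu> \<in> Dh \<and>
        (\<forall>\<tau>\<in>\<Sigma>h \<inter> Sigma0 \<Sigma> tr1 PN. \<forall>v\<in>Dh.
            c_form (A \<nu>) Lt (s00h \<nu>, wh \<nu>) (\<tau>, v) = psi_rhs (A \<nu>) tr1 PD (gD \<nu>) (sfg \<nu>) \<tau>)"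
    \<comment> \<open>reduced basis\<close>
    and SN: "finite SN" "SN \<subseteq> \<D>"
    and mu: "\<mu> \<in> \<D>"
    and u0rb_prop: "u0rb \<in> span (u0h ` SN) \<and>
        (\<forall>v\<in>span (u0h ` SN). a_form (A \<mu>) \<Lambda> u0rb v
            = phi_rhs (A \<mu>) \<Lambda> \<iota> tr0 PN (f \<mu>) (gN \<mu>) (ug \<mu>) v)"
    and s00rb_prop: "s00rb \<in> span (s00h ` SN) \<and>
        (\<forall>\<tau>\<in>span (s00h ` SN). b_form (A \<mu>) s00rb \<tau>
            = psi_rhs (A \<mu>) tr1 PD (gD \<mu>) (sfg \<mu>) \<tau>)"
    \<comment> \<open>exact solutions\<close>
    and u_prop: "u \<in> Vg tr0 PD (gD \<mu>) \<and>
        (\<forall>v\<in>V0 tr0 PD. a_form (A \<mu>) \<Lambda> u v = inner (f \<mu>) (\<iota> v) - ip_on PN (gN \<mu>) (tr0 v))"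
    and sigma_prop: "\<sigma> \<in> Sigma_fg \<Sigma> Lt tr1 PN (f \<mu>) (gN \<mu>) \<and>
        (\<forall>\<tau>\<in>Sigma00 \<Sigma> Lt tr1 PN. b_form (A \<mu>) \<sigma> \<tau> = - ip_on PD (tr1 \<tau>) (gD \<mu>))"
  shows
    "energy_norm (A \<mu>) \<Lambda> (u - (u0h \<mu> + ug \<mu>)) \<le> energy_norm (A \<mu>) \<Lambda> (u - (u0rb + ug \<mu>))
     \<and> R_norm (A \<mu>) (\<sigma> - (s00h \<mu> + sfg \<mu>)) \<le> R_norm (A \<mu>) (\<sigma> - (s00rb + sfg \<mu>))
     \<and> pair_norm (A \<mu>) \<Lambda> (u - (u0h \<mu> + ug \<mu>)) (\<sigma> - (s00h \<mu> + sfg \<mu>))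
         \<le> pair_norm (A \<mu>) \<Lambda> (u - (u0rb + ug \<mu>)) (\<sigma> - (s00rb + sfg \<mu>))
     \<and> (\<mu> \<in> SN \<longrightarrow>
         energy_norm (A \<mu>) \<Lambda> (u - (u0h \<mu> + ug \<mu>)) = energy_norm (A \<mu>) \<Lambda> (u - (u0rb + ug \<mu>))
       \<and> R_norm (A \<mu>) (\<sigma> - (s00h \<mu> + sfg \<mu>)) = R_norm (A \<mu>) (\<sigma> - (s00rb + sfg \<mu>))
       \<and> pair_norm (A \<mu>) \<Lambda> (u - (u0h \<mu> + ug \<mu>)) (\<sigma> - (s00h \<mu> + sfg \<mu>))
         = pair_norm (A \<mu>) \<Lambda> (u - (u0rb + ug \<mu>)) (\<sigma> - (s00rb + sfg \<mu>)))"
proof -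
  define Am where "Am = A \<mu>"
  have Ap: "bounded_linear Am \<and> bij Am \<and> (\<forall>x y. inner (Am x) y = inner x (Am y))
        \<and> (\<forall>q. c1 * (norm q)\<^sup>2 \<le> inner (Am q) q \<and> inner (Am q) q \<le> c2 * (norm q)\<^sup>2)"
    using A_prop mu unfolding Am_def by blast
  have Alin: "linear Am" using Ap bounded_linear.linear by blast
  have Asym: "\<forall>x y. inner (Am x) y = inner x (Am y)" using Ap by blast
  have Apos: "\<And>q. inner (Am q) q \<ge> 0"
  proof -
    fix q :: 'q
    have "c1 * (norm q)\<^sup>2 \<ge> 0" using c12 by simp
    then show "inner (Am q) q \<ge> 0" using Ap by (meson order_trans)
  qed
  define B where "B = inv Am"
  have bijA: "bij Am" using Ap by blast
  have AB: "\<And>x. Am (B x) = x" unfolding B_def using bijA by (meson bij_inv_eq_iff)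
  have injA: "inj Am" using bijA bij_is_inj by blast
  have Blin: "linear B"
  proof (rule linearI)
    fix x y
    have "Am (B (x+y)) = Am (B x + B y)" using AB linear_add[OF Alin] by metis
    then show "B (x+y) = B x + B y" using injA by (meson injD)
  next
    fix c x
    have "Am (B (c *\<^sub>R x)) = Am (c *\<^sub>R B x)" using AB linear_scale[OF Alin] by metis
    then show "B (c *\<^sub>R x) = c *\<^sub>R B x" using injA by (meson injD)
  qed
  have Bsym: "\<forall>x y. inner (B x) y = inner x (B y)"
  proof (intro allI)
    fix x y
    have "inner (B x) y = inner (B x) (Am (B y))" using AB by simp
    also have "\<dots> = inner (Am (B x)) (B y)" using Asym by simp
    also have "\<dots> = inner x (B y)" using AB by simp
    finally show "inner (B x) y = inner x (B y)" .
  qed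
  have Bpos: "\<And>x. inner (B x) x \<ge> 0"
  proof -
    fix x :: 'q
    have "inner (B x) x = inner (Am (B x)) (B x)" using AB Asym by (metis inner_commute)
    then show "inner (B x) x \<ge> 0" using Apos by simp
  qed
  have bB: "\<And>x y. b_form (A \<mu>) x y = inner (B x) y" unfolding b_form_def B_def Am_def by simp
  have aA: "\<And>x y. a_form (A \<mu>) \<Lambda> x y = inner (Am (\<Lambda> x)) (\<Lambda> y)" unfolding a_form_def Am_def by simp
  have Llin: "linear \<Lambda>" using Lam bounded_linear.linear by blast
  have PDlin: "linear PD" using PD unfolding orth_proj_def using bounded_linear.linear by blast
  have PNlin: "linear PN" using PN unfolding orth_proj_def using bounded_linear.linear by blast
  have tr0l: "linear tr0" using tr0_lin bounded_linear.linear by blast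
  have Sig0: "0 \<in> \<Sigma>" using Sig_sub subspace_0 by blast
  have Lt0: "Lt 0 = 0" using Lt_lin Sig0 unfolding linear_on_set_def by (metis scale_zero_left)
  have tr10: "tr1 0 = 0" using tr1_lin Sig0 unfolding linear_on_set_def by (metis scale_zero_left)
  obtain BS where BS: "\<Sigma>h = span BS" using Sh_fd unfolding fin_dim_space_def by blast
  have Sh0: "0 \<in> \<Sigma>h" using BS span_zero by blast
  have Dh0: "0 \<in> Dh" using Lt_Sh Sh0 Lt0 by force
  have zS0: "0 \<in> \<Sigma>h \<inter> Sigma0 \<Sigma> tr1 PN" using Sh0 Sig0 tr10 linear_0[OF PNlin]
    unfolding Sigma0_def by simp
  have s00_Lt: "\<And>\<nu>. \<nu> \<in> \<D> \<Longrightarrow> Lt (s00h \<nu>) = 0"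
  proof -
    fix \<nu> assume nu: "\<nu> \<in> \<D>"
    have sh: "s00h \<nu> \<in> \<Sigma>h" using s00h_prop nu by blast
    have LD: "Lt (s00h \<nu>) \<in> Dh" using Lt_Sh sh by blast
    have "c_form (A \<nu>) Lt (s00h \<nu>, wh \<nu>) (0, Lt (s00h \<nu>)) = psi_rhs (A \<nu>) tr1 PD (gD \<nu>) (sfg \<nu>) 0"
      using s00h_prop nu zS0 LD by blast
    then have "inner (Lt (s00h \<nu>)) (Lt (s00h \<nu>)) = 0"
      unfolding c_form_def psi_rhs_def b_form_def ip_on_def
      by (simp add: Lt0 tr10 linear_0[OF PDlin])
    then show "Lt (s00h \<nu>) = 0" by simp
  qed
  have s00_S00: "\<And>\<nu>. \<nu> \<in> \<D> \<Longrightarrow> s00h \<nu> \<in> Sigma00 \<Sigma> Lt tr1 PN \<and> s00h \<nu> \<in> \<Sigma>h"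
    using s00h_prop s00_Lt unfolding Sigma00_def by blast
  define eh where "eh = u - (u0h \<mu> + ug \<mu>)"
  define d where "d = u0h \<mu> - u0rb"
  have erb: "u - (u0rb + ug \<mu>) = eh + d" unfolding eh_def d_def by (simp add: algebra_simps)
  define F where "F v = inner (f \<mu>) (\<iota> v) - ip_on PN (gN \<mu>) (tr0 v)" for v
  have aeh: "\<And>v. inner (Am (\<Lambda> eh)) (\<Lambda> v) = inner (Am (\<Lambda> u)) (\<Lambda> v) - inner (Am (\<Lambda> (u0h \<mu>))) (\<Lambda> v)
       - inner (Am (\<Lambda> (ug \<mu>))) (\<Lambda> v)"
    unfolding eh_def by (simp add: linear_diff[OF Llin] linear_add[OF Llin] linear_diff[OF Alin]
        linear_add[OF Alin] inner_diff_left inner_add_left)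
  have galV: "\<And>v. v \<in> Vh \<inter> V0 tr0 PD \<Longrightarrow> inner (Am (\<Lambda> eh)) (\<Lambda> v) = 0"
  proof -
    fix v assume v: "v \<in> Vh \<inter> V0 tr0 PD"
    have "inner (Am (\<Lambda> u)) (\<Lambda> v) = F v" using u_prop v aA unfolding F_def by auto
    moreover have "inner (Am (\<Lambda> (u0h \<mu>))) (\<Lambda> v) = F v - inner (Am (\<Lambda> (ug \<mu>))) (\<Lambda> v)"
      using u0h_prop mu v aA unfolding F_def phi_rhs_def by auto
    ultimately show "inner (Am (\<Lambda> eh)) (\<Lambda> v) = 0" using aeh by simp
  qed
  define Oa where "Oa = {v. inner (Am (\<Lambda> eh)) (\<Lambda> v) = 0}"
  have Oa_sub: "subspace Oa" unfolding Oa_def subspace_def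
    by (simp add: linear_0[OF Llin] linear_add[OF Llin] linear_scale[OF Llin] inner_add_right)
  have "u0h ` SN \<subseteq> Oa" using galV u0h_prop SN(2) unfolding Oa_def by blast
  then have spOa: "span (u0h ` SN) \<subseteq> Oa" using Oa_sub span_minimal by blast
  have "u0h \<mu> \<in> Oa" using galV u0h_prop mu unfolding Oa_def by blast
  then have dOa: "d \<in> Oa" using spOa u0rb_prop Oa_sub subspace_diff unfolding d_def by blast
  then have aorth: "inner (Am (\<Lambda> eh)) (\<Lambda> d) = 0" unfolding Oa_def by simp
  have Lerb: "\<Lambda> (u - (u0rb + ug \<mu>)) = \<Lambda> eh + \<Lambda> d" using erb linear_add[OF Llin] by simp
  have P1: "inner (Am (\<Lambda> (u - (u0rb + ug \<mu>)))) (\<Lambda> (u - (u0rb + ug \<mu>)))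
      = inner (Am (\<Lambda> eh)) (\<Lambda> eh) + inner (Am (\<Lambda> d)) (\<Lambda> d)"
    unfolding Lerb using quad_orth[OF Alin Asym aorth] .
  define seh where "seh = \<sigma> - (s00h \<mu> + sfg \<mu>)"
  define sd where "sd = s00h \<mu> - s00rb"
  have serb: "\<sigma> - (s00rb + sfg \<mu>) = seh + sd" unfolding seh_def sd_def by (simp add: algebra_simps)
  have beh: "\<And>t. inner (B seh) t = inner (B \<sigma>) t - inner (B (s00h \<mu>)) t - inner (B (sfg \<mu>)) t"
    unfolding seh_def by (simp add: linear_diff[OF Blin] linear_add[OF Blin] inner_diff_left inner_add_left)
  have galS: "\<And>t. t \<in> Sigma00 \<Sigma> Lt tr1 PN \<Longrightarrow> t \<in> \<Sigma>h \<Longrightarrow> inner (B seh) t = 0"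
  proof -
    fix t assume t: "t \<in> Sigma00 \<Sigma> Lt tr1 PN" "t \<in> \<Sigma>h"
    have "inner (B \<sigma>) t = - ip_on PD (tr1 t) (gD \<mu>)" using sigma_prop t bB by auto
    moreover have "c_form (A \<mu>) Lt (s00h \<mu>, wh \<mu>) (t, 0) = psi_rhs (A \<mu>) tr1 PD (gD \<mu>) (sfg \<mu>) t"
      using s00h_prop mu t Dh0 unfolding Sigma00_def by blast
    then have "inner (B (s00h \<mu>)) t = - ip_on PD (tr1 t) (gD \<mu>) - inner (B (sfg \<mu>)) t"
      using t unfolding c_form_def psi_rhs_def Sigma00_def by (simp add: bB)
    ultimately show "inner (B seh) t = 0" using beh by simp
  qed
  define Ob where "Ob = {t. inner (B seh) t = 0}"
  have Ob_sub: "subspace Ob" unfolding Ob_def subspace_def by (simp add: inner_add_right)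
  have "s00h ` SN \<subseteq> Ob" using galS s00_S00 SN(2) unfolding Ob_def by blast
  then have spOb: "span (s00h ` SN) \<subseteq> Ob" using Ob_sub span_minimal by blast
  have "s00h \<mu> \<in> Ob" using galS s00_S00 mu unfolding Ob_def by blast
  then have sdOb: "sd \<in> Ob" using spOb s00rb_prop Ob_sub subspace_diff unfolding sd_def by blast
  then have borth: "inner (B seh) sd = 0" unfolding Ob_def by simp
  have P2: "inner (B (\<sigma> - (s00rb + sfg \<mu>))) (\<sigma> - (s00rb + sfg \<mu>))
      = inner (B seh) seh + inner (B sd) sd"
    unfolding serb using quad_orth[OF Blin Bsym borth] .
  have eqa: "\<mu> \<in> SN \<Longrightarrow> inner (Am (\<Lambda> d)) (\<Lambda> d) = 0"
  proof -
    assume muS: "\<mu> \<in> SN"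
    have V0s: "subspace (V0 tr0 PD)" unfolding V0_def subspace_def
      by (simp add: linear_0[OF tr0l] linear_0[OF PDlin] linear_add[OF tr0l] linear_add[OF PDlin]
          linear_scale[OF tr0l] linear_scale[OF PDlin])
    have "u0h ` SN \<subseteq> V0 tr0 PD" using u0h_prop SN(2) by blast
    then have spV: "span (u0h ` SN) \<subseteq> V0 tr0 PD" using V0s span_minimal by blast
    have dsp: "d \<in> span (u0h ` SN)" unfolding d_def using u0rb_prop muS
      by (simp add: span_base span_diff)
    have dV: "d \<in> V0 tr0 PD" using dsp spV by blast
    have r1: "inner (Am (\<Lambda> u0rb)) (\<Lambda> d) = F d - inner (Am (\<Lambda> (ug \<mu>))) (\<Lambda> d)"
      using u0rb_prop dsp aA unfolding F_def phi_rhs_def by auto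
    have r2: "inner (Am (\<Lambda> u)) (\<Lambda> d) = F d" using u_prop dV aA unfolding F_def by auto
    have "inner (Am (\<Lambda> d)) (\<Lambda> d) = inner (Am (\<Lambda> (u0h \<mu>))) (\<Lambda> d) - inner (Am (\<Lambda> u0rb)) (\<Lambda> d)"
      unfolding d_def by (simp add: linear_diff[OF Llin] linear_diff[OF Alin] inner_diff_left)
    then show ?thesis using r1 r2 aorth aeh[of d] by simp
  qed
  have eqb: "\<mu> \<in> SN \<Longrightarrow> inner (B sd) sd = 0"
  proof -
    assume muS: "\<mu> \<in> SN"
    have S00s: "subspace (Sigma00 \<Sigma> Lt tr1 PN)" unfolding Sigma00_def Sigma0_def subspace_def
    proof (intro conjI ballI allI)
      show "0 \<in> {\<tau> \<in> {\<tau> \<in> \<Sigma>. PN (tr1 \<tau>) = 0}. Lt \<tau> = 0}"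
        using Sig0 Lt0 tr10 linear_0[OF PNlin] by simp
    next
      fix x y assume "x \<in> {\<tau> \<in> {\<tau> \<in> \<Sigma>. PN (tr1 \<tau>) = 0}. Lt \<tau> = 0}"
        "y \<in> {\<tau> \<in> {\<tau> \<in> \<Sigma>. PN (tr1 \<tau>) = 0}. Lt \<tau> = 0}"
      then show "x + y \<in> {\<tau> \<in> {\<tau> \<in> \<Sigma>. PN (tr1 \<tau>) = 0}. Lt \<tau> = 0}"
        using Sig_sub Lt_lin tr1_lin linear_add[OF PNlin] unfolding linear_on_set_def
        by (simp add: subspace_add)
    next
      fix c x assume "x \<in> {\<tau> \<in> {\<tau> \<in> \<Sigma>. PN (tr1 \<tau>) = 0}. Lt \<tau> = 0}"
      then show "c *\<^sub>R x \<in> {\<tau> \<in> {\<tau> \<in> \<Sigma>. PN (tr1 \<tau>) = 0}. Lt \<tau> = 0}"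
        using Sig_sub Lt_lin tr1_lin linear_scale[OF PNlin] unfolding linear_on_set_def
        by (simp add: subspace_scale)
    qed
    have "s00h ` SN \<subseteq> Sigma00 \<Sigma> Lt tr1 PN" using s00_S00 SN(2) by blast
    then have spS: "span (s00h ` SN) \<subseteq> Sigma00 \<Sigma> Lt tr1 PN" using S00s span_minimal by blast
    have dsp: "sd \<in> span (s00h ` SN)" unfolding sd_def using s00rb_prop muS
      by (simp add: span_base span_diff)
    have dS: "sd \<in> Sigma00 \<Sigma> Lt tr1 PN" using dsp spS by blast
    have r1: "inner (B s00rb) sd = - ip_on PD (tr1 sd) (gD \<mu>) - inner (B (sfg \<mu>)) sd"
      using s00rb_prop dsp bB unfolding psi_rhs_def by auto
    have r2: "inner (B \<sigma>) sd = - ip_on PD (tr1 sd) (gD \<mu>)" using sigma_prop dS bB by auto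
    have "inner (B sd) sd = inner (B (s00h \<mu>)) sd - inner (B s00rb) sd"
      unfolding sd_def by (simp add: linear_diff[OF Blin] inner_diff_left)
    then show ?thesis using r1 r2 borth beh[of sd] by simp
  qed
  define P where "P = inner (Am (\<Lambda> eh)) (\<Lambda> eh)"
  define Q where "Q = inner (Am (\<Lambda> d)) (\<Lambda> d)"
  define R1 where "R1 = inner (B seh) seh"
  define R2 where "R2 = inner (B sd) sd"
  have nn: "P \<ge> 0" "Q \<ge> 0" "R1 \<ge> 0" "R2 \<ge> 0" unfolding P_def Q_def R1_def R2_def
    using Apos Bpos by auto
  have E1: "energy_norm (A \<mu>) \<Lambda> (u - (u0h \<mu> + ug \<mu>)) = sqrt P"
    unfolding energy_norm_def P_def eh_def aA by simp
  have E2: "energy_norm (A \<mu>) \<Lambda> (u - (u0rb + ug \<mu>)) = sqrt (P + Q)"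
    unfolding energy_norm_def P_def Q_def aA P1 by simp
  have R1e: "R_norm (A \<mu>) (\<sigma> - (s00h \<mu> + sfg \<mu>)) = sqrt R1"
    unfolding R_norm_def R1_def seh_def bB by simp
  have R2e: "R_norm (A \<mu>) (\<sigma> - (s00rb + sfg \<mu>)) = sqrt (R1 + R2)"
    unfolding R_norm_def R1_def R2_def bB P2 by simp
  have Pa1: "pair_norm (A \<mu>) \<Lambda> (u - (u0h \<mu> + ug \<mu>)) (\<sigma> - (s00h \<mu> + sfg \<mu>)) = sqrt (P + R1)"
    unfolding pair_norm_def E1 R1e using nn by simp
  have Pa2: "pair_norm (A \<mu>) \<Lambda> (u - (u0rb + ug \<mu>)) (\<sigma> - (s00rb + sfg \<mu>)) = sqrt (P + Q + (R1 + R2))"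
    unfolding pair_norm_def E2 R2e using nn by simp
  show ?thesis unfolding E1 E2 R1e R2e Pa1 Pa2
    using nn eqa eqb unfolding Q_def[symmetric] R2_def[symmetric] by auto
qed


end
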